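(* Let $H$ be a connected graph, let $r\ge 2$, and let $G=H\circ rK_1$. Then $T\subseteq V(G)$ is a $\operatorname{Z}$-irrelevant set of $G$ if and only if $T\subseteq V(H)$.
   Context: Zero forcing on a graph $G$: starting with a set $S$ of blue vertices (others white), a blue vertex $v$ may change a white vertex $w$ to blue if $w$ is the only white neighbor of $v$; $S$ is a zero forcing set if repeated application colors all of $V(G)$ blue. A vertex $v$ is $\operatorname{Z}$-irrelevant if $v$ belongs to no minimal (under inclusion) zero forcing set of $G$; a set is $\operatorname{Z}$-irrelevant if all its vertices are. $rK_1$ is the graph of $r$ isolated vertices. The corona $H\circ F$ is obtained from $H$ by taking, for each $v\in V(H)$, a disjoint copy $F_v$ of $F$ and joining $v$ to every vertex of $F_v$; thus $H\circ rK_1$ attaches $r$ pendant leaves to each vertex of $H$. *)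

theory Defs
  imports Main
begin

definition simple_graph :: "'a set \<Rightarrow> ('a \<Rightarrow> 'a \<Rightarrow> bool) \<Rightarrow> bool" where
  "simple_graph V E \<longleftrightarrow> finite V \<and> (\<forall>u v. E u v \<longrightarrow> u \<in> V \<and> v \<in> V)
     \<and> (\<forall>u v. E u v \<longrightarrow> E v u) \<and> (\<forall>v. \<not> E v v)"

definition connected_graph :: "'a set \<Rightarrow> ('a \<Rightarrow> 'a \<Rightarrow> bool) \<Rightarrow> bool" where
  "connected_graph V E \<longleftrightarrow> simple_graph V E \<and> V \<noteq> {}
     \<and> (\<forall>u\<in>V. \<forall>v\<in>V. E\<^sup>*\<^sup>* u v)"

text \<open>Since blue vertices stay blue, the
final colouring is the least set closed under the rule.\<close>

inductive_set zf_closure :: "'a set \<Rightarrow> ('a \<Rightarrow> 'a \<Rightarrow> bool) \<Rightarrow> 'a set \<Rightarrow> 'a set"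
  for V E S where
  init: "x \<in> S \<Longrightarrow> x \<in> V \<Longrightarrow> x \<in> zf_closure V E S"
| force: "v \<in> zf_closure V E S \<Longrightarrow> w \<in> V \<Longrightarrow> E v w \<Longrightarrow>
          (\<forall>u\<in>V. E v u \<and> u \<noteq> w \<longrightarrow> u \<in> zf_closure V E S) \<Longrightarrow>
          w \<in> zf_closure V E S"

definition zero_forcing_set :: "'a set \<Rightarrow> ('a \<Rightarrow> 'a \<Rightarrow> bool) \<Rightarrow> 'a set \<Rightarrow> bool" where
  "zero_forcing_set V E S \<longleftrightarrow> S \<subseteq> V \<and> zf_closure V E S = V"

definition minimal_zero_forcing_set :: "'a set \<Rightarrow> ('a \<Rightarrow> 'a \<Rightarrow> bool) \<Rightarrow> 'a set \<Rightarrow> bool" where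
  "minimal_zero_forcing_set V E S \<longleftrightarrow> zero_forcing_set V E S
     \<and> (\<forall>S'. S' \<subset> S \<longrightarrow> \<not> zero_forcing_set V E S')"

definition Z_irrelevant_vertex :: "'a set \<Rightarrow> ('a \<Rightarrow> 'a \<Rightarrow> bool) \<Rightarrow> 'a \<Rightarrow> bool" where
  "Z_irrelevant_vertex V E v \<longleftrightarrow> v \<in> V \<and> (\<forall>S. minimal_zero_forcing_set V E S \<longrightarrow> v \<notin> S)"

definition Z_irrelevant_set :: "'a set \<Rightarrow> ('a \<Rightarrow> 'a \<Rightarrow> bool) \<Rightarrow> 'a set \<Rightarrow> bool" where
  "Z_irrelevant_set V E T \<longleftrightarrow> T \<subseteq> V \<and> (\<forall>v\<in>T. Z_irrelevant_vertex V E v)"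

text \<open>Corona H \<circ> rK_1: vertex Inl v is the copy of v \<in> V(H); Inr (v,i), i < r,
are the r pendant leaves attached to v.\<close>

definition corona_rK1_verts :: "'a set \<Rightarrow> nat \<Rightarrow> ('a + 'a \<times> nat) set" where
  "corona_rK1_verts V r = Inl ` V \<union> Inr ` (V \<times> {..<r})"

fun corona_rK1_edge :: "('a \<Rightarrow> 'a \<Rightarrow> bool) \<Rightarrow> 'a set \<Rightarrow> nat \<Rightarrow>
    ('a + 'a \<times> nat) \<Rightarrow> ('a + 'a \<times> nat) \<Rightarrow> bool" where
  "corona_rK1_edge E V r (Inl u) (Inl v) = E u v"
| "corona_rK1_edge E V r (Inl u) (Inr (v, i)) = (u = v \<and> u \<in> V \<and> i < r)"
| "corona_rK1_edge E V r (Inr (v, i)) (Inl u) = (u = v \<and> u \<in> V \<and> i < r)"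
| "corona_rK1_edge E V r (Inr _) (Inr _) = False"

end

theory Submission
  imports Defs
begin

lemma two_white:
  assumes "u \<in> V" "j < r" "j' < r" "j \<noteq> j'"
    and "Inr (u, j) \<notin> S" "Inr (u, j') \<notin> S"
  shows "Inr (u, j) \<notin> zf_closure (corona_rK1_verts V r) (corona_rK1_edge E V r) S"
proof -
  have "x \<in> zf_closure (corona_rK1_verts V r) (corona_rK1_edge E V r) S \<Longrightarrow>
        x \<noteq> Inr (u, j) \<and> x \<noteq> Inr (u, j')" for x
  proof (induction rule: zf_closure.induct)
    case (init x)
    then show ?case using assms by auto
  next
    case (force v w)
    have uj: "Inr (u, j) \<in> corona_rK1_verts V r" "Inr (u, j') \<in> corona_rK1_verts V r"
      using assms by (auto simp: corona_rK1_verts_def)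
    show ?case
    proof (rule ccontr)
      assume "\<not> (w \<noteq> Inr (u, j) \<and> w \<noteq> Inr (u, j'))"
      then consider "w = Inr (u, j)" | "w = Inr (u, j')" by blast
      then show False
      proof cases
        case 1
        with force.hyps(3) have "v = Inl u"
          by (cases v) auto
        have "corona_rK1_edge E V r (Inl u) (Inr (u, j'))" using assms by simp
        moreover have "Inr (u, j') \<noteq> w" using 1 assms(4) by simp
        ultimately have "Inr (u, j') \<noteq> Inr (u, j')"
          using force(5) uj(2) \<open>v = Inl u\<close> by blast
        then show False by simp
      next
        case 2
        with force.hyps(3) have "v = Inl u"
          by (cases v) auto
        have "corona_rK1_edge E V r (Inl u) (Inr (u, j))" using assms by simp
        moreover have "Inr (u, j) \<noteq> w" using 2 assms(4) by simp
        ultimately have "Inr (u, j) \<noteq> Inr (u, j)"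
          using force(5) uj(1) \<open>v = Inl u\<close> by blast
        then show False by simp
      qed
    qed
  qed
  then show ?thesis by blast
qed

lemma closure_sub: "zf_closure V E S \<subseteq> V"
proof
  fix x assume "x \<in> zf_closure V E S" then show "x \<in> V"
    by (induction rule: zf_closure.induct) auto
qed

lemma zfs_lemma:
  assumes "r \<ge> 2" "S \<subseteq> corona_rK1_verts V r"
    and cov: "\<And>u j j'. u \<in> V \<Longrightarrow> j < r \<Longrightarrow> j' < r \<Longrightarrow> j \<noteq> j' \<Longrightarrow>
             Inr (u, j) \<in> S \<or> Inr (u, j') \<in> S"
  shows "zero_forcing_set (corona_rK1_verts V r) (corona_rK1_edge E V r) S"
proof -
  let ?C = "zf_closure (corona_rK1_verts V r) (corona_rK1_edge E V r) S"
  have L: "Inl u \<in> ?C" if u: "u \<in> V" for u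
  proof -
    have "0 < r" "1 < r" using assms(1) by auto
    then obtain j where j: "j < r" "Inr (u, j) \<in> S"
      using cov[OF u, of 0 1] by auto
    have jC: "Inr (u, j) \<in> ?C"
      using j u by (intro zf_closure.init) (auto simp: corona_rK1_verts_def)
    show ?thesis
    proof (rule zf_closure.force[OF jC])
      show "Inl u \<in> corona_rK1_verts V r" using u by (auto simp: corona_rK1_verts_def)
      show "corona_rK1_edge E V r (Inr (u, j)) (Inl u)" using u j by simp
      show "\<forall>x\<in>corona_rK1_verts V r. corona_rK1_edge E V r (Inr (u, j)) x \<and> x \<noteq> Inl u \<longrightarrow> x \<in> ?C"
      proof (intro ballI impI)
        fix x assume "x \<in> corona_rK1_verts V r" "corona_rK1_edge E V r (Inr (u, j)) x \<and> x \<noteq> Inl u"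
        then show "x \<in> ?C" by (cases x) auto
      qed
    qed
  qed
  have R: "Inr (u, j) \<in> ?C" if u: "u \<in> V" and j: "j < r" for u j
  proof (cases "Inr (u, j) \<in> S")
    case True
    then show ?thesis using u j by (intro zf_closure.init) (auto simp: corona_rK1_verts_def)
  next
    case False
    show ?thesis
    proof (rule zf_closure.force[OF L[OF u]])
      show "Inr (u, j) \<in> corona_rK1_verts V r" using u j by (auto simp: corona_rK1_verts_def)
      show "corona_rK1_edge E V r (Inl u) (Inr (u, j))" using u j by simp
      show "\<forall>x\<in>corona_rK1_verts V r. corona_rK1_edge E V r (Inl u) x \<and> x \<noteq> Inr (u, j) \<longrightarrow> x \<in> ?C"
      proof (intro ballI impI)
        fix x assume x: "x \<in> corona_rK1_verts V r" "corona_rK1_edge E V r (Inl u) x \<and> x \<noteq> Inr (u, j)"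
        show "x \<in> ?C"
        proof (cases x)
          case (Inl y)
          then show ?thesis using x L by (auto simp: corona_rK1_verts_def)
        next
          case (Inr p)
          then obtain y k where p: "x = Inr (y, k)" by (cases p) auto
          with x have "y = u" "k < r" "k \<noteq> j" by auto
          with cov[OF u j, of k] False p x have "x \<in> S" by auto
          then show ?thesis using x by (intro zf_closure.init) auto
        qed
      qed
    qed
  qed
  have "corona_rK1_verts V r \<subseteq> ?C"
    using L R by (auto simp: corona_rK1_verts_def)
  with closure_sub[of "corona_rK1_verts V r" "corona_rK1_edge E V r" S] assms(2)
  show ?thesis unfolding zero_forcing_set_def by blast
qed

lemma zfs_cov:
  assumes "zero_forcing_set (corona_rK1_verts V r) (corona_rK1_edge E V r) S"
    "u \<in> V" "j < r" "j' < r" "j \<noteq> j'"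
  shows "Inr (u, j) \<in> S \<or> Inr (u, j') \<in> S"
proof (rule ccontr)
  assume "\<not> ?thesis"
  then have "Inr (u, j) \<notin> zf_closure (corona_rK1_verts V r) (corona_rK1_edge E V r) S"
    using two_white[OF assms(2-5)] by blast
  moreover have "Inr (u, j) \<in> corona_rK1_verts V r" using assms by (auto simp: corona_rK1_verts_def)
  ultimately show False using assms(1) unfolding zero_forcing_set_def by blast
qed

theorem proposition2p20:
  fixes V :: "'a set" and E :: "'a \<Rightarrow> 'a \<Rightarrow> bool" and r :: nat
    and T :: "('a + 'a \<times> nat) set"
  assumes "connected_graph V E"
    and "r \<ge> 2"
    and "T \<subseteq> corona_rK1_verts V r"
  shows "Z_irrelevant_set (corona_rK1_verts V r) (corona_rK1_edge E V r) T
         \<longleftrightarrow> T \<subseteq> Inl ` V"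
proof
  assume irr: "Z_irrelevant_set (corona_rK1_verts V r) (corona_rK1_edge E V r) T"
  show "T \<subseteq> Inl ` V"
  proof
    fix x assume xT: "x \<in> T"
    show "x \<in> Inl ` V"
    proof (rule ccontr)
      assume "x \<notin> Inl ` V"
      with xT assms(3) obtain v i where x: "x = Inr (v, i)" "v \<in> V" "i < r"
        by (auto simp: corona_rK1_verts_def)
      define c where "c = (if i = 0 then 1 else (0::nat))"
      have c: "c < r" "c \<noteq> i" using assms(2) x by (auto simp: c_def)
      define S :: "('a + 'a \<times> nat) set" where "S = Inr ` (V \<times> {..<r}) - {Inr (u, c) | u. True}"
      have Ssub: "S \<subseteq> corona_rK1_verts V r" by (auto simp: S_def corona_rK1_verts_def)
      have zS: "zero_forcing_set (corona_rK1_verts V r) (corona_rK1_edge E V r) S"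
        by (rule zfs_lemma[OF assms(2) Ssub]) (auto simp: S_def)
      have "minimal_zero_forcing_set (corona_rK1_verts V r) (corona_rK1_edge E V r) S"
        unfolding minimal_zero_forcing_set_def
      proof (intro conjI zS allI impI notI)
        fix S' assume S': "S' \<subset> S" "zero_forcing_set (corona_rK1_verts V r) (corona_rK1_edge E V r) S'"
        then obtain y where y: "y \<in> S" "y \<notin> S'" by blast
        then obtain u k where yk: "y = Inr (u, k)" "u \<in> V" "k < r" "k \<noteq> c"
          by (auto simp: S_def)
        have "Inr (u, c) \<notin> S'" using S' by (auto simp: S_def)
        with zfs_cov[OF S'(2) yk(2) yk(3) c(1) yk(4)] y yk show False by auto
      qed
      moreover have "x \<in> S" using x c by (auto simp: S_def)
      ultimately show False using irr xT
        unfolding Z_irrelevant_set_def Z_irrelevant_vertex_def by blast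
    qed
  qed
next
  assume TV: "T \<subseteq> Inl ` V"
  show "Z_irrelevant_set (corona_rK1_verts V r) (corona_rK1_edge E V r) T"
    unfolding Z_irrelevant_set_def Z_irrelevant_vertex_def
  proof (intro conjI assms(3) ballI allI impI notI)
    fix x assume "x \<in> T" then show "x \<in> corona_rK1_verts V r" using assms(3) by blast
  next
    fix x S assume xT: "x \<in> T"
      and m: "minimal_zero_forcing_set (corona_rK1_verts V r) (corona_rK1_edge E V r) S"
      and xS: "x \<in> S"
    from xT TV obtain v where xv: "x = Inl v" by blast
    have zS: "zero_forcing_set (corona_rK1_verts V r) (corona_rK1_edge E V r) S"
      using m by (simp add: minimal_zero_forcing_set_def)
    define S0 where "S0 = S - range Inl"
    have "zero_forcing_set (corona_rK1_verts V r) (corona_rK1_edge E V r) S0"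
    proof (rule zfs_lemma[OF assms(2)])
      show "S0 \<subseteq> corona_rK1_verts V r" using zS by (auto simp: S0_def zero_forcing_set_def)
      fix u j j' assume "u \<in> V" "j < r" "j' < r" "j \<noteq> j'"
      then show "Inr (u, j) \<in> S0 \<or> Inr (u, j') \<in> S0"
        using zfs_cov[OF zS] by (auto simp: S0_def)
    qed
    moreover have "S0 \<subset> S" using xS xv by (auto simp: S0_def)
    ultimately show False using m by (auto simp: minimal_zero_forcing_set_def)
  qed
qed

end
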